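(* Let $$\begin{array}{ccc} X\times_B Y & \xrightarrow{\pi_2} & Y\\ \downarrow{\scriptstyle\pi_1} & & \downarrow{\scriptstyle p}\\ X & \xrightarrow{q} & B\end{array}$$ be a pullback diagram in the category $\mathbf{Loc}$ of locales, where $\pi_1$ is an isomorphism, $\pi_2$ is an open surjection and $q$ is a coequalizer. Then $p$ is an isomorphism.
   Context: A map of locales is open if its inverse image frame homomorphism has a left adjoint satisfying the Frobenius condition; it is surjective if its inverse image is injective. *)

theory Defs
  imports Main
begin

text \<open>We present a frame as a pair (carrier, order)
on an ambient type, so that frames of different sizes can live in one type.\<close>

type_synonym 'a frm = "'a set \<times> ('a \<Rightarrow> 'a \<Rightarrow> bool)"

definition carr :: "'a frm \<Rightarrow> 'a set" where "carr F = fst F"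
definition leq :: "'a frm \<Rightarrow> 'a \<Rightarrow> 'a \<Rightarrow> bool" where "leq F = snd F"

definition is_join :: "'a frm \<Rightarrow> 'a set \<Rightarrow> 'a \<Rightarrow> bool" where
  "is_join F S s \<longleftrightarrow> s \<in> carr F \<and> (\<forall>x\<in>S. leq F x s)
     \<and> (\<forall>u\<in>carr F. (\<forall>x\<in>S. leq F x u) \<longrightarrow> leq F s u)"

definition is_meet :: "'a frm \<Rightarrow> 'a set \<Rightarrow> 'a \<Rightarrow> bool" where
  "is_meet F S s \<longleftrightarrow> s \<in> carr F \<and> (\<forall>x\<in>S. leq F s x)
     \<and> (\<forall>u\<in>carr F. (\<forall>x\<in>S. leq F u x) \<longrightarrow> leq F u s)"

definition fjoin :: "'a frm \<Rightarrow> 'a set \<Rightarrow> 'a" where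
  "fjoin F S = (THE s. is_join F S s)"

definition fmeet :: "'a frm \<Rightarrow> 'a \<Rightarrow> 'a \<Rightarrow> 'a" where
  "fmeet F a b = (THE m. is_meet F {a, b} m)"

definition ftop :: "'a frm \<Rightarrow> 'a" where
  "ftop F = fjoin F (carr F)"

definition is_frame :: "'a frm \<Rightarrow> bool" where
  "is_frame F \<longleftrightarrow>
     (\<forall>x\<in>carr F. leq F x x)
   \<and> (\<forall>x\<in>carr F. \<forall>y\<in>carr F. leq F x y \<and> leq F y x \<longrightarrow> x = y)
   \<and> (\<forall>x\<in>carr F. \<forall>y\<in>carr F. \<forall>z\<in>carr F. leq F x y \<and> leq F y z \<longrightarrow> leq F x z)
   \<and> (\<forall>S. S \<subseteq> carr F \<longrightarrow> (\<exists>s. is_join F S s))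
   \<and> (\<forall>a\<in>carr F. \<forall>b\<in>carr F. \<exists>m. is_meet F {a, b} m)
   \<and> (\<forall>a\<in>carr F. \<forall>S. S \<subseteq> carr F \<longrightarrow>
        fmeet F a (fjoin F S) = fjoin F ((\<lambda>x. fmeet F a x) ` S))"

definition frame_hom :: "'a frm \<Rightarrow> 'b frm \<Rightarrow> ('a \<Rightarrow> 'b) \<Rightarrow> bool" where
  "frame_hom F G h \<longleftrightarrow> is_frame F \<and> is_frame G
   \<and> (\<forall>x\<in>carr F. h x \<in> carr G)
   \<and> (\<forall>S. S \<subseteq> carr F \<longrightarrow> h (fjoin F S) = fjoin G (h ` S))
   \<and> (\<forall>a\<in>carr F. \<forall>b\<in>carr F. h (fmeet F a b) = fmeet G (h a) (h b))
   \<and> h (ftop F) = ftop G"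

definition agree_on :: "'a set \<Rightarrow> ('a \<Rightarrow> 'b) \<Rightarrow> ('a \<Rightarrow> 'b) \<Rightarrow> bool" where
  "agree_on A h k \<longleftrightarrow> (\<forall>x\<in>A. h x = k x)"

definition frame_iso :: "'a frm \<Rightarrow> 'b frm \<Rightarrow> ('a \<Rightarrow> 'b) \<Rightarrow> bool" where
  "frame_iso F G h \<longleftrightarrow> frame_hom F G h \<and>
     (\<exists>k. frame_hom G F k \<and> (\<forall>x\<in>carr F. k (h x) = x) \<and> (\<forall>y\<in>carr G. h (k y) = y))"

text \<open>A map of locales f : X \<rightarrow> Y is represented by its inverse image frame
homomorphism f* : Y \<rightarrow> X (the function argument). Composition of locale maps
g \<circ> f corresponds to f* \<circ> g*.\<close>

definition loc_map :: "'x frm \<Rightarrow> 'y frm \<Rightarrow> ('y \<Rightarrow> 'x) \<Rightarrow> bool" where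
  "loc_map X Y f \<longleftrightarrow> frame_hom Y X f"

definition loc_iso :: "'x frm \<Rightarrow> 'y frm \<Rightarrow> ('y \<Rightarrow> 'x) \<Rightarrow> bool" where
  "loc_iso X Y f \<longleftrightarrow> loc_map X Y f \<and> frame_iso Y X f"

definition loc_open :: "'x frm \<Rightarrow> 'y frm \<Rightarrow> ('y \<Rightarrow> 'x) \<Rightarrow> bool" where
  "loc_open X Y f \<longleftrightarrow> loc_map X Y f \<and>
     (\<exists>l. (\<forall>a\<in>carr X. l a \<in> carr Y)
        \<and> (\<forall>a\<in>carr X. \<forall>b\<in>carr Y. leq Y (l a) b \<longleftrightarrow> leq X a (f b))
        \<and> (\<forall>a\<in>carr X. \<forall>b\<in>carr Y. l (fmeet X a (f b)) = fmeet Y (l a) b))"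

definition loc_surj :: "'x frm \<Rightarrow> 'y frm \<Rightarrow> ('y \<Rightarrow> 'x) \<Rightarrow> bool" where
  "loc_surj X Y f \<longleftrightarrow> loc_map X Y f \<and> inj_on f (carr Y)"

text \<open>Test objects W range over all locales whose
frame has its carrier inside the ambient type 'w (passed via TYPE). In the main
theorem 'w is chosen large enough that this is equivalent to the usual universal
property over all locales.\<close>

definition loc_coequalizer ::
  "'w itself \<Rightarrow> 'z frm \<Rightarrow> 'x frm \<Rightarrow> 'b frm \<Rightarrow> ('x \<Rightarrow> 'z) \<Rightarrow> ('x \<Rightarrow> 'z) \<Rightarrow> ('b \<Rightarrow> 'x) \<Rightarrow> bool"
  where
  "loc_coequalizer (_::'w itself) Z X B f g q \<longleftrightarrow>
     loc_map Z X f \<and> loc_map Z X g \<and> loc_map X B q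
   \<and> agree_on (carr B) (\<lambda>b. f (q b)) (\<lambda>b. g (q b))
   \<and> (\<forall>(W::'w frm) h. loc_map X W h \<and> agree_on (carr W) (\<lambda>w. f (h w)) (\<lambda>w. g (h w)) \<longrightarrow>
        (\<exists>k. loc_map B W k \<and> agree_on (carr W) (\<lambda>w. q (k w)) h
           \<and> (\<forall>k'. loc_map B W k' \<and> agree_on (carr W) (\<lambda>w. q (k' w)) h
                  \<longrightarrow> agree_on (carr W) k k')))"

definition loc_pullback ::
  "'w itself \<Rightarrow> 'p frm \<Rightarrow> 'x frm \<Rightarrow> 'y frm \<Rightarrow> 'b frm \<Rightarrow>
   ('x \<Rightarrow> 'p) \<Rightarrow> ('y \<Rightarrow> 'p) \<Rightarrow> ('b \<Rightarrow> 'x) \<Rightarrow> ('b \<Rightarrow> 'y) \<Rightarrow> bool"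
  where
  "loc_pullback (_::'w itself) P X Y B pi1 pi2 q p \<longleftrightarrow>
     loc_map P X pi1 \<and> loc_map P Y pi2 \<and> loc_map X B q \<and> loc_map Y B p
   \<and> agree_on (carr B) (\<lambda>b. pi1 (q b)) (\<lambda>b. pi2 (p b))
   \<and> (\<forall>(W::'w frm) a c. loc_map W X a \<and> loc_map W Y c
          \<and> agree_on (carr B) (\<lambda>b. a (q b)) (\<lambda>b. c (p b)) \<longrightarrow>
        (\<exists>h. loc_map W P h
           \<and> agree_on (carr X) (\<lambda>x. h (pi1 x)) a \<and> agree_on (carr Y) (\<lambda>y. h (pi2 y)) c
           \<and> (\<forall>h'. loc_map W P h'
                  \<and> agree_on (carr X) (\<lambda>x. h' (pi1 x)) a \<and> agree_on (carr Y) (\<lambda>y. h' (pi2 y)) c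
                  \<longrightarrow> agree_on (carr P) h h')))"

end

theory Submission
  imports Defs
begin

lemma is_frameD:
  assumes "is_frame F"
  shows "\<forall>x\<in>carr F. leq F x x"
   and "\<forall>x\<in>carr F. \<forall>y\<in>carr F. leq F x y \<and> leq F y x \<longrightarrow> x = y"
   and "\<forall>x\<in>carr F. \<forall>y\<in>carr F. \<forall>z\<in>carr F. leq F x y \<and> leq F y z \<longrightarrow> leq F x z"
   and "\<forall>S. S \<subseteq> carr F \<longrightarrow> (\<exists>s. is_join F S s)"
   and "\<forall>a\<in>carr F. \<forall>b\<in>carr F. \<exists>m. is_meet F {a, b} m"
   and "\<forall>a\<in>carr F. \<forall>S. S \<subseteq> carr F \<longrightarrow>
        fmeet F a (fjoin F S) = fjoin F ((\<lambda>x. fmeet F a x) ` S)"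
  using assms unfolding is_frame_def by argo+

lemma fr_refl: "is_frame F \<Longrightarrow> x \<in> carr F \<Longrightarrow> leq F x x"
  using is_frameD(1) by blast
lemma fr_antisym: "is_frame F \<Longrightarrow> x \<in> carr F \<Longrightarrow> y \<in> carr F \<Longrightarrow> leq F x y \<Longrightarrow> leq F y x \<Longrightarrow> x = y"
  using is_frameD(2) by blast
lemma fr_trans: "is_frame F \<Longrightarrow> x \<in> carr F \<Longrightarrow> y \<in> carr F \<Longrightarrow> z \<in> carr F \<Longrightarrow> leq F x y \<Longrightarrow> leq F y z \<Longrightarrow> leq F x z"
  using is_frameD(3) by blast
lemma fr_distrib: "is_frame F \<Longrightarrow> a \<in> carr F \<Longrightarrow> S \<subseteq> carr F \<Longrightarrow>
        fmeet F a (fjoin F S) = fjoin F ((\<lambda>x. fmeet F a x) ` S)"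
  using is_frameD(6) by blast

lemma is_joinD: assumes "is_join F S s"
  shows "s \<in> carr F" "\<And>x. x \<in> S \<Longrightarrow> leq F x s" "\<And>u. u \<in> carr F \<Longrightarrow> (\<And>x. x \<in> S \<Longrightarrow> leq F x u) \<Longrightarrow> leq F s u"
  using assms unfolding is_join_def by auto
lemma is_meetD: assumes "is_meet F S s"
  shows "s \<in> carr F" "\<And>x. x \<in> S \<Longrightarrow> leq F s x" "\<And>u. u \<in> carr F \<Longrightarrow> (\<And>x. x \<in> S \<Longrightarrow> leq F u x) \<Longrightarrow> leq F u s"
  using assms unfolding is_meet_def by auto

lemma join_unique:
  assumes A: "\<forall>x\<in>carr F. \<forall>y\<in>carr F. leq F x y \<and> leq F y x \<longrightarrow> x = y" and j: "is_join F S s"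
  shows "fjoin F S = s"
  unfolding fjoin_def
proof (rule the_equality)
  show "is_join F S s" by fact
  fix t assume t: "is_join F S t"
  have "leq F t s" using is_joinD(3)[OF t is_joinD(1)[OF j] is_joinD(2)[OF j]] .
  moreover have "leq F s t" using is_joinD(3)[OF j is_joinD(1)[OF t] is_joinD(2)[OF t]] .
  ultimately show "t = s" using A is_joinD(1)[OF t] is_joinD(1)[OF j] by blast
qed

lemma meet_unique:
  assumes A: "\<forall>x\<in>carr F. \<forall>y\<in>carr F. leq F x y \<and> leq F y x \<longrightarrow> x = y" and j: "is_meet F {a,b} s"
  shows "fmeet F a b = s"
  unfolding fmeet_def
proof (rule the_equality)
  show "is_meet F {a,b} s" by fact
  fix t assume t: "is_meet F {a,b} t"
  have "leq F t s" using is_meetD(3)[OF j is_meetD(1)[OF t] is_meetD(2)[OF t]] .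
  moreover have "leq F s t" using is_meetD(3)[OF t is_meetD(1)[OF j] is_meetD(2)[OF j]] .
  ultimately show "t = s" using A is_meetD(1)[OF t] is_meetD(1)[OF j] by blast
qed

lemma fjoin_is_join: assumes "is_frame F" "S \<subseteq> carr F" shows "is_join F S (fjoin F S)"
proof -
  obtain s where "is_join F S s" using assms is_frameD(4) by blast
  moreover have "fjoin F S = s" using join_unique[OF is_frameD(2)[OF assms(1)] \<open>is_join F S s\<close>] .
  ultimately show ?thesis by simp
qed

lemma fjoin_carr: "is_frame F \<Longrightarrow> S \<subseteq> carr F \<Longrightarrow> fjoin F S \<in> carr F"
  using fjoin_is_join is_joinD(1) by metis
lemma fjoin_upper: "is_frame F \<Longrightarrow> S \<subseteq> carr F \<Longrightarrow> x \<in> S \<Longrightarrow> leq F x (fjoin F S)"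
  using fjoin_is_join is_joinD(2) by metis
lemma fjoin_least: "is_frame F \<Longrightarrow> S \<subseteq> carr F \<Longrightarrow> u \<in> carr F \<Longrightarrow> (\<And>x. x \<in> S \<Longrightarrow> leq F x u) \<Longrightarrow> leq F (fjoin F S) u"
  using fjoin_is_join is_joinD(3) by metis

lemma fmeet_is_meet: assumes "is_frame F" "a \<in> carr F" "b \<in> carr F" shows "is_meet F {a,b} (fmeet F a b)"
proof -
  obtain s where "is_meet F {a,b} s" using assms is_frameD(5) by blast
  moreover have "fmeet F a b = s" using meet_unique[OF is_frameD(2)[OF assms(1)] \<open>is_meet F {a,b} s\<close>] .
  ultimately show ?thesis by simp
qed

lemma fmeet_carr: "is_frame F \<Longrightarrow> a \<in> carr F \<Longrightarrow> b \<in> carr F \<Longrightarrow> fmeet F a b \<in> carr F"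
  using fmeet_is_meet is_meetD(1) by metis
lemma fmeet_le1: "is_frame F \<Longrightarrow> a \<in> carr F \<Longrightarrow> b \<in> carr F \<Longrightarrow> leq F (fmeet F a b) a"
  using fmeet_is_meet is_meetD(2) by (metis insertI1)
lemma fmeet_le2: "is_frame F \<Longrightarrow> a \<in> carr F \<Longrightarrow> b \<in> carr F \<Longrightarrow> leq F (fmeet F a b) b"
  using fmeet_is_meet is_meetD(2) by (metis insertI1 insertI2)
lemma fmeet_greatest: "is_frame F \<Longrightarrow> a \<in> carr F \<Longrightarrow> b \<in> carr F \<Longrightarrow> u \<in> carr F \<Longrightarrow> leq F u a \<Longrightarrow> leq F u b \<Longrightarrow> leq F u (fmeet F a b)"
  using fmeet_is_meet[of F a b] is_meetD(3)[of F "{a,b}" "fmeet F a b" u] by blast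
lemma fmeet_comm: "fmeet F a b = fmeet F b a"
  by (simp add: fmeet_def insert_commute)

lemma ftop_carr: "is_frame F \<Longrightarrow> ftop F \<in> carr F"
  unfolding ftop_def by (simp add: fjoin_carr)
lemma ftop_greatest: "is_frame F \<Longrightarrow> x \<in> carr F \<Longrightarrow> leq F x (ftop F)"
  unfolding ftop_def by (simp add: fjoin_upper)

lemma fmeet_top: assumes F: "is_frame F" and a: "a \<in> carr F" shows "fmeet F a (ftop F) = a"
proof -
  have t: "ftop F \<in> carr F" "leq F a (ftop F)" using ftop_carr[OF F] ftop_greatest[OF F a] by auto
  have 1: "leq F (fmeet F a (ftop F)) a" using fmeet_le1[OF F a t(1)] .
  have 2: "leq F a (fmeet F a (ftop F))" using fmeet_greatest[OF F a t(1) a fr_refl[OF F a] t(2)] .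
  show ?thesis using fr_antisym[OF F fmeet_carr[OF F a t(1)] a 1 2] .
qed

lemma eq_by_lower: assumes F: "is_frame F" and xy: "x \<in> carr F" "y \<in> carr F" and h: "\<And>w. w \<in> carr F \<Longrightarrow> leq F w x \<longleftrightarrow> leq F w y"
  shows "x = y"
proof -
  have "leq F x y" using h[OF xy(1)] fr_refl[OF F xy(1)] by blast
  moreover have "leq F y x" using h[OF xy(2)] fr_refl[OF F xy(2)] by blast
  ultimately show ?thesis using fr_antisym[OF F xy] by blast
qed

lemma le_meet_iff: assumes F: "is_frame F" and uv: "u \<in> carr F" "v \<in> carr F" and w: "w \<in> carr F"
  shows "leq F w (fmeet F u v) \<longleftrightarrow> leq F w u \<and> leq F w v"
proof
  assume "leq F w (fmeet F u v)"
  moreover have "fmeet F u v \<in> carr F" using fmeet_carr[OF F uv] .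
  ultimately show "leq F w u \<and> leq F w v"
    using fr_trans[OF F w \<open>fmeet F u v \<in> carr F\<close> uv(1) _ fmeet_le1[OF F uv]]
          fr_trans[OF F w \<open>fmeet F u v \<in> carr F\<close> uv(2) _ fmeet_le2[OF F uv]] by simp
next
  assume "leq F w u \<and> leq F w v" then show "leq F w (fmeet F u v)" using fmeet_greatest[OF F uv w] by blast
qed

lemma meet4: assumes F: "is_frame F" and c: "a \<in> carr F" "b \<in> carr F" "c \<in> carr F" "d \<in> carr F"
  shows "fmeet F (fmeet F a b) (fmeet F c d) = fmeet F (fmeet F a c) (fmeet F b d)"
proof (rule eq_by_lower[OF F])
  have m: "fmeet F a b \<in> carr F" "fmeet F c d \<in> carr F" "fmeet F a c \<in> carr F" "fmeet F b d \<in> carr F"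
    using fmeet_carr[OF F c(1,2)] fmeet_carr[OF F c(3,4)] fmeet_carr[OF F c(1,3)] fmeet_carr[OF F c(2,4)] by simp_all
  show "fmeet F (fmeet F a b) (fmeet F c d) \<in> carr F" "fmeet F (fmeet F a c) (fmeet F b d) \<in> carr F"
    using fmeet_carr[OF F m(1,2)] fmeet_carr[OF F m(3,4)] by simp_all
  fix w assume w: "w \<in> carr F"
  show "leq F w (fmeet F (fmeet F a b) (fmeet F c d)) = leq F w (fmeet F (fmeet F a c) (fmeet F b d))"
    unfolding le_meet_iff[OF F m(1,2) w] le_meet_iff[OF F m(3,4) w] le_meet_iff[OF F c(1,2) w]
      le_meet_iff[OF F c(3,4) w] le_meet_iff[OF F c(1,3) w] le_meet_iff[OF F c(2,4) w] by blast
qed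

lemma frame_homD:
  assumes "frame_hom F G h"
  shows "is_frame F" "is_frame G" "\<forall>x\<in>carr F. h x \<in> carr G"
   "\<forall>S. S \<subseteq> carr F \<longrightarrow> h (fjoin F S) = fjoin G (h ` S)"
   "\<forall>a\<in>carr F. \<forall>b\<in>carr F. h (fmeet F a b) = fmeet G (h a) (h b)"
   "h (ftop F) = ftop G"
  using assms unfolding frame_hom_def by argo+
lemma hom_frames: "frame_hom F G h \<Longrightarrow> is_frame F \<and> is_frame G" using frame_homD(1,2) by blast
lemma hom_carr: "frame_hom F G h \<Longrightarrow> x \<in> carr F \<Longrightarrow> h x \<in> carr G" using frame_homD(3) by blast
lemma hom_join: "frame_hom F G h \<Longrightarrow> S \<subseteq> carr F \<Longrightarrow> h (fjoin F S) = fjoin G (h ` S)" using frame_homD(4) by blast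
lemma hom_meet: "frame_hom F G h \<Longrightarrow> a \<in> carr F \<Longrightarrow> b \<in> carr F \<Longrightarrow> h (fmeet F a b) = fmeet G (h a) (h b)" using frame_homD(5) by blast
lemma hom_top: "frame_hom F G h \<Longrightarrow> h (ftop F) = ftop G" using frame_homD(6) by blast

lemma frame_homI:
  assumes "is_frame F" "is_frame G" "\<And>x. x \<in> carr F \<Longrightarrow> h x \<in> carr G"
   "\<And>S. S \<subseteq> carr F \<Longrightarrow> h (fjoin F S) = fjoin G (h ` S)"
   "\<And>a b. a \<in> carr F \<Longrightarrow> b \<in> carr F \<Longrightarrow> h (fmeet F a b) = fmeet G (h a) (h b)"
   "h (ftop F) = ftop G"
  shows "frame_hom F G h"
  unfolding frame_hom_def using assms by blast

lemma hom_comp: assumes h: "frame_hom F G h" and k: "frame_hom G H k" shows "frame_hom F H (\<lambda>x. k (h x))"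
proof (rule frame_homI)
  show "is_frame F" using hom_frames[OF h] by blast
  show "is_frame H" using hom_frames[OF k] by blast
  fix x assume "x \<in> carr F" then show "k (h x) \<in> carr H" using hom_carr[OF k hom_carr[OF h]] by blast
next
  fix S assume S: "S \<subseteq> carr F"
  have hS: "h ` S \<subseteq> carr G" using S hom_carr[OF h] by blast
  show "k (h (fjoin F S)) = fjoin H ((\<lambda>x. k (h x)) ` S)"
    unfolding hom_join[OF h S] hom_join[OF k hS] image_image ..
next
  fix a b assume "a \<in> carr F" "b \<in> carr F"
  then show "k (h (fmeet F a b)) = fmeet H (k (h a)) (k (h b))"
    using hom_meet[OF h] hom_meet[OF k] hom_carr[OF h] by simp
next
  show "k (h (ftop F)) = ftop H" using hom_top[OF h] hom_top[OF k] by simp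
qed

lemma hom_id: "is_frame F \<Longrightarrow> frame_hom F F (\<lambda>x. x)"
  by (rule frame_homI) auto

definition subfr :: "'a frm \<Rightarrow> 'a set \<Rightarrow> bool" where
  "subfr F A \<longleftrightarrow> A \<subseteq> carr F \<and> (\<forall>T. T \<subseteq> A \<longrightarrow> fjoin F T \<in> A)
     \<and> (\<forall>a\<in>A. \<forall>b\<in>A. fmeet F a b \<in> A) \<and> ftop F \<in> A"

lemma subfrI: "A \<subseteq> carr F \<Longrightarrow> (\<And>T. T \<subseteq> A \<Longrightarrow> fjoin F T \<in> A)
     \<Longrightarrow> (\<And>a b. a \<in> A \<Longrightarrow> b \<in> A \<Longrightarrow> fmeet F a b \<in> A) \<Longrightarrow> ftop F \<in> A \<Longrightarrow> subfr F A"
  unfolding subfr_def by blast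

lemma subfrD: assumes "subfr F A" shows "A \<subseteq> carr F" "\<And>T. T \<subseteq> A \<Longrightarrow> fjoin F T \<in> A"
     "\<And>a b. a \<in> A \<Longrightarrow> b \<in> A \<Longrightarrow> fmeet F a b \<in> A" "ftop F \<in> A"
  using assms unfolding subfr_def by blast+

definition trf :: "'a frm \<Rightarrow> 'a set \<Rightarrow> ('a \<Rightarrow> 'c) \<Rightarrow> 'c frm" where
  "trf F A e = (e ` A, \<lambda>s t. leq F (the_inv_into A e s) (the_inv_into A e t))"

lemma trf_carr: "carr (trf F A e) = e ` A" by (simp add: trf_def carr_def)
lemma trf_leq: "leq (trf F A e) s t = leq F (the_inv_into A e s) (the_inv_into A e t)"
  by (simp add: trf_def leq_def)

lemma subfr_carr: assumes F: "is_frame F" shows "subfr F (carr F)"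
  by (rule subfrI) (use fjoin_carr[OF F] fmeet_carr[OF F] ftop_carr[OF F] in auto)

context
  fixes F :: "'a frm" and A and e :: "'a \<Rightarrow> 'c"
  assumes F: "is_frame F" and sub: "subfr F A" and inj: "inj_on e A"
begin

private lemma AF: "a \<in> A \<Longrightarrow> a \<in> carr F" using subfrD(1)[OF sub] by blast
private lemma dec[simp]: "a \<in> A \<Longrightarrow> the_inv_into A e (e a) = a"
  using inj by (simp add: the_inv_into_f_f)

private lemma antisymW: "\<forall>x\<in>carr (trf F A e). \<forall>y\<in>carr (trf F A e). leq (trf F A e) x y \<and> leq (trf F A e) y x \<longrightarrow> x = y"
proof (intro ballI impI)
  fix x y assume x: "x \<in> carr (trf F A e)" and y: "y \<in> carr (trf F A e)" and l: "leq (trf F A e) x y \<and> leq (trf F A e) y x"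
  obtain a where a: "a \<in> A" "x = e a" using x by (auto simp: trf_carr)
  obtain b where b: "b \<in> A" "y = e b" using y by (auto simp: trf_carr)
  have "leq F a b" "leq F b a" using l a b by (simp_all add: trf_leq)
  then have "a = b" using fr_antisym[OF F AF[OF a(1)] AF[OF b(1)]] by blast
  then show "x = y" using a b by simp
qed

lemma trf_join_is: assumes T: "T \<subseteq> A" shows "is_join (trf F A e) (e ` T) (e (fjoin F T))"
proof -
  have TF: "T \<subseteq> carr F" using T AF by blast
  have jA: "fjoin F T \<in> A" using subfrD(2)[OF sub T] .
  show ?thesis unfolding is_join_def trf_carr trf_leq
  proof (intro conjI ballI impI)
    show "e (fjoin F T) \<in> e ` A" using jA by blast
  next
    fix x assume "x \<in> e ` T"
    then obtain t where t: "t \<in> T" "x = e t" by blast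
    have "leq F t (fjoin F T)" using fjoin_upper[OF F TF t(1)] .
    then show "leq F (the_inv_into A e x) (the_inv_into A e (e (fjoin F T)))"
      using t T jA by (simp add: subsetD)
  next
    fix u assume u: "u \<in> e ` A" and ub: "\<forall>x\<in>e ` T. leq F (the_inv_into A e x) (the_inv_into A e u)"
    then obtain a where a: "a \<in> A" "u = e a" by blast
    have "\<And>t. t \<in> T \<Longrightarrow> leq F t a"
    proof -
      fix t assume t: "t \<in> T"
      then have "leq F (the_inv_into A e (e t)) (the_inv_into A e u)" using ub by blast
      then show "leq F t a" using t T a by (simp add: subsetD)
    qed
    then have "leq F (fjoin F T) a" using fjoin_least[OF F TF AF[OF a(1)]] by blast
    then show "leq F (the_inv_into A e (e (fjoin F T))) (the_inv_into A e u)"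
      using a jA by simp
  qed
qed

lemma trf_join: "T \<subseteq> A \<Longrightarrow> fjoin (trf F A e) (e ` T) = e (fjoin F T)"
  using join_unique[OF antisymW trf_join_is] .

lemma trf_meet_is: assumes a: "a \<in> A" and b: "b \<in> A" shows "is_meet (trf F A e) {e a, e b} (e (fmeet F a b))"
proof -
  have mA: "fmeet F a b \<in> A" using subfrD(3)[OF sub a b] .
  have aF: "a \<in> carr F" and bF: "b \<in> carr F" using AF a b by auto
  show ?thesis unfolding is_meet_def trf_carr trf_leq
  proof (intro conjI ballI impI)
    show "e (fmeet F a b) \<in> e ` A" using mA by blast
  next
    fix x assume "x \<in> {e a, e b}"
    then have "x = e a \<or> x = e b" by blast
    then show "leq F (the_inv_into A e (e (fmeet F a b))) (the_inv_into A e x)"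
      using mA a b fmeet_le1[OF F aF bF] fmeet_le2[OF F aF bF] by auto
  next
    fix u assume u: "u \<in> e ` A" and ub: "\<forall>x\<in>{e a, e b}. leq F (the_inv_into A e u) (the_inv_into A e x)"
    then obtain c where c: "c \<in> A" "u = e c" by blast
    have "leq F c a" "leq F c b" using ub c a b by simp_all
    then have "leq F c (fmeet F a b)" using fmeet_greatest[OF F aF bF AF[OF c(1)]] by blast
    then show "leq F (the_inv_into A e u) (the_inv_into A e (e (fmeet F a b)))"
      using c mA by simp
  qed
qed

lemma trf_meet: "a \<in> A \<Longrightarrow> b \<in> A \<Longrightarrow> fmeet (trf F A e) (e a) (e b) = e (fmeet F a b)"
  using meet_unique[OF antisymW trf_meet_is] .

lemma topA: "fjoin F A = ftop F"
proof -
  have tA: "ftop F \<in> A" using subfrD(4)[OF sub] .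
  have AF': "A \<subseteq> carr F" using subfrD(1)[OF sub] .
  have 1: "leq F (fjoin F A) (ftop F)" using ftop_greatest[OF F fjoin_carr[OF F AF']] .
  have 2: "leq F (ftop F) (fjoin F A)" using fjoin_upper[OF F AF' tA] .
  show ?thesis using fr_antisym[OF F fjoin_carr[OF F AF'] ftop_carr[OF F] 1 2] .
qed

lemma trf_top: "ftop (trf F A e) = e (ftop F)"
  unfolding ftop_def[of "trf F A e"] trf_carr using trf_join[of A] topA by simp

private lemma img: "S \<subseteq> e ` A \<Longrightarrow> S = e ` (the_inv_into A e ` S) \<and> the_inv_into A e ` S \<subseteq> A"
proof
  assume S: "S \<subseteq> e ` A"
  show "S = e ` (the_inv_into A e ` S)"
  proof
    show "S \<subseteq> e ` the_inv_into A e ` S"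
    proof
      fix x assume x: "x \<in> S"
      then obtain a where a: "a \<in> A" "x = e a" using S by blast
      then have "x = e (the_inv_into A e x)" by simp
      then show "x \<in> e ` the_inv_into A e ` S" using x by blast
    qed
    show "e ` the_inv_into A e ` S \<subseteq> S" using S by auto
  qed
  show "the_inv_into A e ` S \<subseteq> A" using S by auto
qed

lemma trf_frame: "is_frame (trf F A e)"
  unfolding is_frame_def
proof (intro conjI ballI allI impI)
  fix x assume "x \<in> carr (trf F A e)"
  then obtain a where "a \<in> A" "x = e a" by (auto simp: trf_carr)
  then show "leq (trf F A e) x x" using fr_refl[OF F AF] by (simp add: trf_leq)
next
  fix x y assume "x \<in> carr (trf F A e)" "y \<in> carr (trf F A e)" "leq (trf F A e) x y \<and> leq (trf F A e) y x"
  then show "x = y" using antisymW by blast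
next
  fix x y z assume x: "x \<in> carr (trf F A e)" and y: "y \<in> carr (trf F A e)" and z: "z \<in> carr (trf F A e)"
    and l: "leq (trf F A e) x y \<and> leq (trf F A e) y z"
  obtain a where a: "a \<in> A" "x = e a" using x by (auto simp: trf_carr)
  obtain b where b: "b \<in> A" "y = e b" using y by (auto simp: trf_carr)
  obtain c where c: "c \<in> A" "z = e c" using z by (auto simp: trf_carr)
  have "leq F a b" "leq F b c" using l a b c by (simp_all add: trf_leq)
  then have "leq F a c" using fr_trans[OF F AF[OF a(1)] AF[OF b(1)] AF[OF c(1)]] by blast
  then show "leq (trf F A e) x z" using a c by (simp add: trf_leq)
next
  fix S assume "S \<subseteq> carr (trf F A e)"
  then have "S \<subseteq> e ` A" by (simp add: trf_carr)
  then have "S = e ` (the_inv_into A e ` S)" "the_inv_into A e ` S \<subseteq> A" using img by blast+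
  then show "\<exists>s. is_join (trf F A e) S s" using trf_join_is by metis
next
  fix a b assume "a \<in> carr (trf F A e)" "b \<in> carr (trf F A e)"
  then obtain a' b' where "a' \<in> A" "b' \<in> A" "a = e a'" "b = e b'" by (auto simp: trf_carr)
  then show "\<exists>m. is_meet (trf F A e) {a, b} m" using trf_meet_is by blast
next
  fix a S assume a: "a \<in> carr (trf F A e)" and S: "S \<subseteq> carr (trf F A e)"
  then obtain a' where a': "a' \<in> A" "a = e a'" by (auto simp: trf_carr)
  define T where "T = the_inv_into A e ` S"
  have ST: "S = e ` T" "T \<subseteq> A" using S img unfolding T_def trf_carr by blast+
  have TF: "T \<subseteq> carr F" using ST AF by blast
  have mT: "(\<lambda>x. fmeet F a' x) ` T \<subseteq> A" using ST(2) a'(1) subfrD(3)[OF sub] by blast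
  have jA: "fjoin F T \<in> A" using subfrD(2)[OF sub ST(2)] .
  have "fmeet (trf F A e) a (fjoin (trf F A e) S) = fmeet (trf F A e) (e a') (e (fjoin F T))"
    using ST trf_join a' by simp
  also have "\<dots> = e (fmeet F a' (fjoin F T))" using trf_meet[OF a'(1) jA] .
  also have "\<dots> = e (fjoin F ((\<lambda>x. fmeet F a' x) ` T))"
    using fr_distrib[OF F AF[OF a'(1)] TF] by simp
  also have "\<dots> = fjoin (trf F A e) (e ` (\<lambda>x. fmeet F a' x) ` T)"
    using trf_join[OF mT] by simp
  also have "e ` (\<lambda>x. fmeet F a' x) ` T = (\<lambda>x. fmeet (trf F A e) a x) ` S"
  proof -
    have "\<And>t. t \<in> T \<Longrightarrow> e (fmeet F a' t) = fmeet (trf F A e) a (e t)"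
      using trf_meet a' ST(2) by (simp add: subsetD)
    then show ?thesis unfolding ST(1) image_image by simp
  qed
  finally show "fmeet (trf F A e) a (fjoin (trf F A e) S) = fjoin (trf F A e) ((\<lambda>x. fmeet (trf F A e) a x) ` S)" .
qed

lemma trf_hom_in: assumes h: "frame_hom G F h" and hA: "\<And>x. x \<in> carr G \<Longrightarrow> h x \<in> A"
  shows "frame_hom G (trf F A e) (\<lambda>x. e (h x))"
proof (rule frame_homI)
  show "is_frame G" using hom_frames[OF h] by blast
  show "is_frame (trf F A e)" by (rule trf_frame)
  fix x assume "x \<in> carr G" then show "e (h x) \<in> carr (trf F A e)" using hA by (simp add: trf_carr)
next
  fix S assume S: "S \<subseteq> carr G"
  then have hS: "h ` S \<subseteq> A" using hA by blast
  show "e (h (fjoin G S)) = fjoin (trf F A e) ((\<lambda>x. e (h x)) ` S)"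
    unfolding hom_join[OF h S] trf_join[OF hS, symmetric] image_image ..
next
  fix a b assume "a \<in> carr G" "b \<in> carr G"
  then show "e (h (fmeet G a b)) = fmeet (trf F A e) (e (h a)) (e (h b))"
    using hom_meet[OF h] trf_meet hA by simp
next
  show "e (h (ftop G)) = ftop (trf F A e)" using hom_top[OF h] trf_top by simp
qed

lemma trf_hom_out: "frame_hom (trf F A e) F (the_inv_into A e)"
proof (rule frame_homI)
  show "is_frame F" by (rule F)
  show "is_frame (trf F A e)" by (rule trf_frame)
  fix x assume "x \<in> carr (trf F A e)" then show "the_inv_into A e x \<in> carr F" using AF by (auto simp: trf_carr)
next
  fix S assume S: "S \<subseteq> carr (trf F A e)"
  define T where "T = the_inv_into A e ` S"
  have ST: "S = e ` T" "T \<subseteq> A" using S img unfolding T_def trf_carr by blast+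
  have jA: "fjoin F T \<in> A" using subfrD(2)[OF sub ST(2)] .
  show "the_inv_into A e (fjoin (trf F A e) S) = fjoin F (the_inv_into A e ` S)"
    using ST(1) trf_join[OF ST(2)] jA T_def by simp
next
  fix a b assume "a \<in> carr (trf F A e)" "b \<in> carr (trf F A e)"
  then obtain a' b' where ab: "a' \<in> A" "b' \<in> A" "a = e a'" "b = e b'" by (auto simp: trf_carr)
  have "fmeet F a' b' \<in> A" using subfrD(3)[OF sub ab(1,2)] .
  then show "the_inv_into A e (fmeet (trf F A e) a b) = fmeet F (the_inv_into A e a) (the_inv_into A e b)"
    using ab trf_meet by simp
next
  have "ftop F \<in> A" using subfrD(4)[OF sub] .
  then show "the_inv_into A e (ftop (trf F A e)) = ftop F" using trf_top by simp
qed

end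

definition genset :: "'x frm \<Rightarrow> 'z frm \<Rightarrow> ('x \<Rightarrow> 'z) \<Rightarrow> ('x \<Rightarrow> 'z) \<Rightarrow> 'z set" where
  "genset X Z f g = {fmeet Z (f x) (g x') | x x'. x \<in> carr X \<and> x' \<in> carr X}"

definition dset :: "'x frm \<Rightarrow> 'z frm \<Rightarrow> ('x \<Rightarrow> 'z) \<Rightarrow> ('x \<Rightarrow> 'z) \<Rightarrow> 'z \<Rightarrow> 'z set" where
  "dset X Z f g z = {c \<in> genset X Z f g. leq Z c z}"

definition zgen :: "'x frm \<Rightarrow> 'z frm \<Rightarrow> ('x \<Rightarrow> 'z) \<Rightarrow> ('x \<Rightarrow> 'z) \<Rightarrow> 'z set" where
  "zgen X Z f g = {z \<in> carr Z. z = fjoin Z (dset X Z f g z)}"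

context
  fixes X :: "'x frm" and Z :: "'z frm" and f g :: "'x \<Rightarrow> 'z"
  assumes f: "frame_hom X Z f" and g: "frame_hom X Z g"
begin

private lemma X: "is_frame X" using hom_frames[OF f] by blast
private lemma Z: "is_frame Z" using hom_frames[OF f] by blast

lemma gen_carr: "genset X Z f g \<subseteq> carr Z"
  unfolding genset_def using fmeet_carr[OF Z] hom_carr[OF f] hom_carr[OF g] by blast

lemma dset_carr: "dset X Z f g z \<subseteq> carr Z"
  unfolding dset_def using gen_carr by blast

lemma gen_zgen: assumes c: "c \<in> genset X Z f g" shows "c \<in> zgen X Z f g"
proof -
  have cZ: "c \<in> carr Z" using c gen_carr by blast
  have "c \<in> dset X Z f g c" unfolding dset_def using c fr_refl[OF Z cZ] by blast
  then have 1: "leq Z c (fjoin Z (dset X Z f g c))" using fjoin_upper[OF Z dset_carr] by blast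
  have 2: "leq Z (fjoin Z (dset X Z f g c)) c" using fjoin_least[OF Z dset_carr cZ] unfolding dset_def by blast
  have "c = fjoin Z (dset X Z f g c)" using fr_antisym[OF Z cZ fjoin_carr[OF Z dset_carr] 1 2] .
  then show ?thesis unfolding zgen_def using cZ by blast
qed

lemma f_gen: assumes x: "x \<in> carr X" shows "f x \<in> genset X Z f g"
proof -
  have "fmeet Z (f x) (g (ftop X)) = f x"
    using hom_top[OF g] fmeet_top[OF Z hom_carr[OF f x]] by simp
  then show ?thesis unfolding genset_def using x ftop_carr[OF X] by force
qed

lemma g_gen: assumes x: "x \<in> carr X" shows "g x \<in> genset X Z f g"
proof -
  have "fmeet Z (f (ftop X)) (g x) = g x"
    using hom_top[OF f] fmeet_top[OF Z hom_carr[OF g x]] fmeet_comm by metis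
  then show ?thesis unfolding genset_def using x ftop_carr[OF X] by force
qed

lemma gen_meet: assumes c: "c \<in> genset X Z f g" and d: "d \<in> genset X Z f g"
  shows "fmeet Z c d \<in> genset X Z f g"
proof -
  obtain x x' where c': "x \<in> carr X" "x' \<in> carr X" "c = fmeet Z (f x) (g x')" using c unfolding genset_def by blast
  obtain u u' where d': "u \<in> carr X" "u' \<in> carr X" "d = fmeet Z (f u) (g u')" using d unfolding genset_def by blast
  have "fmeet Z c d = fmeet Z (fmeet Z (f x) (f u)) (fmeet Z (g x') (g u'))"
    unfolding c'(3) d'(3) using meet4[OF Z hom_carr[OF f c'(1)] hom_carr[OF g c'(2)] hom_carr[OF f d'(1)] hom_carr[OF g d'(2)]] .
  also have "\<dots> = fmeet Z (f (fmeet X x u)) (g (fmeet X x' u'))"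
    using hom_meet[OF f c'(1) d'(1)] hom_meet[OF g c'(2) d'(2)] by simp
  finally show ?thesis unfolding genset_def using fmeet_carr[OF X c'(1) d'(1)] fmeet_carr[OF X c'(2) d'(2)] by blast
qed

lemma zgen_le: assumes z: "z \<in> zgen X Z f g" and w: "w \<in> carr Z"
  and h: "\<And>c. c \<in> dset X Z f g z \<Longrightarrow> leq Z c w" shows "leq Z z w"
proof -
  have "z = fjoin Z (dset X Z f g z)" using z unfolding zgen_def by blast
  moreover have "leq Z (fjoin Z (dset X Z f g z)) w" using fjoin_least[OF Z dset_carr w] h by blast
  ultimately show ?thesis by simp
qed

lemma zgen_intro: assumes z: "z \<in> carr Z" and h: "leq Z z (fjoin Z (dset X Z f g z))"
  shows "z \<in> zgen X Z f g"
proof -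
  have "leq Z (fjoin Z (dset X Z f g z)) z" using fjoin_least[OF Z dset_carr z] unfolding dset_def by blast
  then have "z = fjoin Z (dset X Z f g z)" using fr_antisym[OF Z z fjoin_carr[OF Z dset_carr] h] by simp
  then show ?thesis unfolding zgen_def using z by blast
qed

lemma zgen_sub: "zgen X Z f g \<subseteq> carr Z" unfolding zgen_def by blast

lemma zgen_subfr: "subfr Z (zgen X Z f g)"
proof (rule subfrI)
  show "zgen X Z f g \<subseteq> carr Z" by (rule zgen_sub)
next
  fix T assume T: "T \<subseteq> zgen X Z f g"
  have TZ: "T \<subseteq> carr Z" using T zgen_sub by blast
  define s where "s = fjoin Z T"
  have sZ: "s \<in> carr Z" unfolding s_def using fjoin_carr[OF Z TZ] .
  have J: "fjoin Z (dset X Z f g s) \<in> carr Z" using fjoin_carr[OF Z dset_carr] .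
  have "leq Z s (fjoin Z (dset X Z f g s))" unfolding s_def
  proof (rule fjoin_least[OF Z TZ J[unfolded s_def]])
    fix t assume t: "t \<in> T"
    have tZ: "t \<in> carr Z" using t TZ by blast
    have ts: "leq Z t s" unfolding s_def using fjoin_upper[OF Z TZ t] .
    show "leq Z t (fjoin Z (dset X Z f g (fjoin Z T)))"
    proof (rule zgen_le)
      show "t \<in> zgen X Z f g" using t T by blast
      show "fjoin Z (dset X Z f g (fjoin Z T)) \<in> carr Z" using J s_def by simp
      fix c assume c: "c \<in> dset X Z f g t"
      have cZ: "c \<in> carr Z" using c dset_carr by blast
      have "leq Z c s" using c fr_trans[OF Z cZ tZ sZ _ ts] unfolding dset_def by blast
      then have "c \<in> dset X Z f g s" using c unfolding dset_def by blast
      then show "leq Z c (fjoin Z (dset X Z f g (fjoin Z T)))" using fjoin_upper[OF Z dset_carr] s_def by blast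
    qed
  qed
  then show "fjoin Z T \<in> zgen X Z f g" using zgen_intro sZ s_def by blast
next
  fix a b assume a: "a \<in> zgen X Z f g" and b: "b \<in> zgen X Z f g"
  have aZ: "a \<in> carr Z" and bZ: "b \<in> carr Z" using a b zgen_sub by blast+
  define m where "m = fmeet Z a b"
  have mZ: "m \<in> carr Z" unfolding m_def using fmeet_carr[OF Z aZ bZ] .
  define J where "J = fjoin Z (dset X Z f g m)"
  have JZ: "J \<in> carr Z" unfolding J_def using fjoin_carr[OF Z dset_carr] .
  have key: "\<And>c d. c \<in> dset X Z f g a \<Longrightarrow> d \<in> dset X Z f g b \<Longrightarrow> leq Z (fmeet Z d c) J"
  proof -
    fix c d assume c: "c \<in> dset X Z f g a" and d: "d \<in> dset X Z f g b"
    have cZ: "c \<in> carr Z" and dZ: "d \<in> carr Z" using c d dset_carr by blast+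
    have gen: "fmeet Z d c \<in> genset X Z f g" using gen_meet c d unfolding dset_def by blast
    have dcZ: "fmeet Z d c \<in> carr Z" using fmeet_carr[OF Z dZ cZ] .
    have "leq Z (fmeet Z d c) a"
      using fr_trans[OF Z dcZ cZ aZ fmeet_le2[OF Z dZ cZ]] c unfolding dset_def by blast
    moreover have "leq Z (fmeet Z d c) b"
      using fr_trans[OF Z dcZ dZ bZ fmeet_le1[OF Z dZ cZ]] d unfolding dset_def by blast
    ultimately have "leq Z (fmeet Z d c) m" unfolding m_def using fmeet_greatest[OF Z aZ bZ dcZ] by blast
    then have "fmeet Z d c \<in> dset X Z f g m" unfolding dset_def using gen by blast
    then show "leq Z (fmeet Z d c) J" unfolding J_def using fjoin_upper[OF Z dset_carr] by blast
  qed
  have ea: "a = fjoin Z (dset X Z f g a)" and eb: "b = fjoin Z (dset X Z f g b)" using a b unfolding zgen_def by blast+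
  have "\<And>d. d \<in> dset X Z f g b \<Longrightarrow> leq Z (fmeet Z a d) J"
  proof -
    fix d assume d: "d \<in> dset X Z f g b"
    have dZ: "d \<in> carr Z" using d dset_carr by blast
    have "fmeet Z a d = fmeet Z d a" by (rule fmeet_comm)
    also have "\<dots> = fjoin Z ((\<lambda>x. fmeet Z d x) ` dset X Z f g a)"
      using fr_distrib[OF Z dZ dset_carr] ea by metis
    finally have eq: "fmeet Z a d = fjoin Z ((\<lambda>x. fmeet Z d x) ` dset X Z f g a)" .
    have sub: "(\<lambda>x. fmeet Z d x) ` dset X Z f g a \<subseteq> carr Z" using fmeet_carr[OF Z dZ] dset_carr by blast
    show "leq Z (fmeet Z a d) J" unfolding eq
      by (rule fjoin_least[OF Z sub JZ]) (use key d in blast)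
  qed
  moreover have "fmeet Z a b = fjoin Z ((\<lambda>x. fmeet Z a x) ` dset X Z f g b)"
    using fr_distrib[OF Z aZ dset_carr] eb by metis
  moreover have sub2: "(\<lambda>x. fmeet Z a x) ` dset X Z f g b \<subseteq> carr Z" using fmeet_carr[OF Z aZ] dset_carr by blast
  ultimately have "leq Z m J" unfolding m_def using fjoin_least[OF Z sub2 JZ] by (metis imageE)
  then show "fmeet Z a b \<in> zgen X Z f g" using zgen_intro mZ unfolding J_def m_def by blast
next
  have "ftop Z = f (ftop X)" using hom_top[OF f] by simp
  then show "ftop Z \<in> zgen X Z f g" using gen_zgen f_gen ftop_carr[OF X] by simp
qed

lemma zgen_inj: assumes inj: "inj_on (pi :: 'x \<Rightarrow> 'p) (carr X)"
  shows "inj_on (\<lambda>z. {(x, u, v, pi x') | x x'. x \<in> carr X \<and> x' \<in> carr X \<and> leq Z (fmeet Z (f x) (g x')) z}) (zgen X Z f g)"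
proof (rule inj_onI)
  fix z1 z2 assume z1: "z1 \<in> zgen X Z f g" and z2: "z2 \<in> zgen X Z f g"
    and eq: "{(x, u, v, pi x') | x x'. x \<in> carr X \<and> x' \<in> carr X \<and> leq Z (fmeet Z (f x) (g x')) z1}
           = {(x, u, v, pi x') | x x'. x \<in> carr X \<and> x' \<in> carr X \<and> leq Z (fmeet Z (f x) (g x')) z2}"
  have D: "dset X Z f g z1 \<subseteq> dset X Z f g z2" if eq: "{(x, u, v, pi x') | x x'. x \<in> carr X \<and> x' \<in> carr X \<and> leq Z (fmeet Z (f x) (g x')) z1}
           = {(x, u, v, pi x') | x x'. x \<in> carr X \<and> x' \<in> carr X \<and> leq Z (fmeet Z (f x) (g x')) z2}" for z1 z2
  proof
    fix c assume c: "c \<in> dset X Z f g z1"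
    then obtain x x' where xx: "x \<in> carr X" "x' \<in> carr X" "c = fmeet Z (f x) (g x')" "leq Z c z1"
      unfolding dset_def genset_def by blast
    then have "(x, u, v, pi x') \<in> {(x, u, v, pi x') | x x'. x \<in> carr X \<and> x' \<in> carr X \<and> leq Z (fmeet Z (f x) (g x')) z1}"
      by blast
    then have "(x, u, v, pi x') \<in> {(x, u, v, pi x') | x x'. x \<in> carr X \<and> x' \<in> carr X \<and> leq Z (fmeet Z (f x) (g x')) z2}"
      using eq by simp
    then obtain y y' where yy: "x = y" "pi x' = pi y'" "y \<in> carr X" "y' \<in> carr X" "leq Z (fmeet Z (f y) (g y')) z2"
      by blast
    have "x' = y'" using inj_onD[OF inj yy(2) xx(2) yy(4)] .
    then have "leq Z c z2" using xx(3) yy by simp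
    then show "c \<in> dset X Z f g z2" using c unfolding dset_def by blast
  qed
  have "dset X Z f g z1 = dset X Z f g z2" using D[OF eq] D[OF eq[symmetric]] by blast
  then show "z1 = z2" using z1 z2 unfolding zgen_def by force
qed

end

lemma pbD:
  assumes "loc_pullback (TYPE('w)) P X Y B pi1 pi2 q p"
  shows "frame_hom X P pi1" "frame_hom Y P pi2" "frame_hom B X q" "frame_hom B Y p"
    "\<forall>b\<in>carr B. pi1 (q b) = pi2 (p b)"
    "\<forall>(W::'w frm) a c. frame_hom X W a \<and> frame_hom Y W c
          \<and> agree_on (carr B) (\<lambda>b. a (q b)) (\<lambda>b. c (p b)) \<longrightarrow>
        (\<exists>h. frame_hom P W h
           \<and> agree_on (carr X) (\<lambda>x. h (pi1 x)) a \<and> agree_on (carr Y) (\<lambda>y. h (pi2 y)) c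
           \<and> (\<forall>h'. frame_hom P W h'
                  \<and> agree_on (carr X) (\<lambda>x. h' (pi1 x)) a \<and> agree_on (carr Y) (\<lambda>y. h' (pi2 y)) c
                  \<longrightarrow> agree_on (carr P) h h'))"
  using assms unfolding loc_pullback_def loc_map_def agree_on_def by argo+

lemma coeqD:
  assumes "loc_coequalizer (TYPE('w)) Z X B f g q"
  shows "frame_hom X Z f" "frame_hom X Z g" "frame_hom B X q"
    "\<forall>b\<in>carr B. f (q b) = g (q b)"
    "\<forall>(W::'w frm) h. frame_hom W X h \<and> agree_on (carr W) (\<lambda>w. f (h w)) (\<lambda>w. g (h w)) \<longrightarrow>
        (\<exists>k. frame_hom W B k \<and> agree_on (carr W) (\<lambda>w. q (k w)) h
           \<and> (\<forall>k'. frame_hom W B k' \<and> agree_on (carr W) (\<lambda>w. q (k' w)) h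
                  \<longrightarrow> agree_on (carr W) k k'))"
  using assms unfolding loc_coequalizer_def loc_map_def agree_on_def by argo+

theorem lemma2p3:
  fixes P :: "'p frm" and X :: "'x frm" and Y :: "'y frm" and B :: "'b frm" and Z :: "'z frm"
    and pi1 :: "'x \<Rightarrow> 'p" and pi2 :: "'y \<Rightarrow> 'p"
    and q :: "'b \<Rightarrow> 'x" and p :: "'b \<Rightarrow> 'y"
    and f g :: "'x \<Rightarrow> 'z"
  assumes pb: "loc_pullback TYPE(('x \<times> 'y \<times> 'b \<times> 'p) set) P X Y B pi1 pi2 q p"
    and iso1: "loc_iso P X pi1"
    and open2: "loc_open P Y pi2"
    and surj2: "loc_surj P Y pi2"
    and coeq: "loc_coequalizer TYPE(('x \<times> 'y \<times> 'b \<times> 'p) set) Z X B f g q"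
  shows "loc_iso Y B p"
proof -
  note hpi1 = pbD(1)[OF pb] and hpi2 = pbD(2)[OF pb] and hq = pbD(3)[OF pb] and hp = pbD(4)[OF pb]
  note comm = pbD(5)[OF pb] and UPpb = pbD(6)[OF pb]
  note hf = coeqD(1)[OF coeq] and hg = coeqD(2)[OF coeq] and fgq = coeqD(4)[OF coeq] and UPco = coeqD(5)[OF coeq]
  have Xf: "is_frame X" and Zf: "is_frame Z" using hom_frames[OF hf] by blast+
  have Yf: "is_frame Y" and Bf: "is_frame B" using hom_frames[OF hp] by blast+
  obtain k1 where hk1: "frame_hom P X k1" and k1a: "\<forall>x\<in>carr X. k1 (pi1 x) = x" and k1b: "\<forall>z\<in>carr P. pi1 (k1 z) = z"
    using iso1 unfolding loc_iso_def frame_iso_def by blast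
  have injpi2: "inj_on pi2 (carr Y)" using surj2 unfolding loc_surj_def by blast
  have injpi1: "inj_on pi1 (carr X)" by (rule inj_on_inverseI[of _ k1]) (use k1a in blast)
  define j where "j = (\<lambda>y. k1 (pi2 y))"
  have hj: "frame_hom Y X j" unfolding j_def by (rule hom_comp[OF hpi2 hk1])
  have jp: "\<And>b. b \<in> carr B \<Longrightarrow> j (p b) = q b"
    unfolding j_def using comm k1a hom_carr[OF hq] by metis
  have pij: "\<And>y. y \<in> carr Y \<Longrightarrow> pi1 (j y) = pi2 y"
    unfolding j_def using k1b hom_carr[OF hpi2] by blast
  have jinj: "\<And>y1 y2. y1 \<in> carr Y \<Longrightarrow> y2 \<in> carr Y \<Longrightarrow> j y1 = j y2 \<Longrightarrow> y1 = y2"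
    using pij injpi2 by (metis inj_onD)

  define e1 :: "'z \<Rightarrow> ('x \<times> 'y \<times> 'b \<times> 'p) set" where
    "e1 = (\<lambda>z. {(x, undefined, undefined, pi1 x') | x x'. x \<in> carr X \<and> x' \<in> carr X \<and> leq Z (fmeet Z (f x) (g x')) z})"
  have inje1: "inj_on e1 (zgen X Z f g)" unfolding e1_def by (rule zgen_inj[OF hf hg injpi1])
  have subZ: "subfr Z (zgen X Z f g)" by (rule zgen_subfr[OF hf hg])
  define W1 where "W1 = trf Z (zgen X Z f g) e1"
  have fZ: "\<And>x. x \<in> carr X \<Longrightarrow> f x \<in> zgen X Z f g" using gen_zgen[OF hf hg] f_gen[OF hf hg] by blast
  have gZ: "\<And>x. x \<in> carr X \<Longrightarrow> g x \<in> zgen X Z f g" using gen_zgen[OF hf hg] g_gen[OF hf hg] by blast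
  have ha: "frame_hom X W1 (\<lambda>x. e1 (g x))" unfolding W1_def by (rule trf_hom_in[OF Zf subZ inje1 hg gZ])
  have hfe: "frame_hom X W1 (\<lambda>x. e1 (f x))" unfolding W1_def by (rule trf_hom_in[OF Zf subZ inje1 hf fZ])
  have hc: "frame_hom Y W1 (\<lambda>y. e1 (f (j y)))" by (rule hom_comp[OF hj hfe])
  have ag: "agree_on (carr B) (\<lambda>b. e1 (g (q b))) (\<lambda>b. e1 (f (j (p b))))"
    unfolding agree_on_def using jp fgq by simp
  obtain h where hh: "agree_on (carr X) (\<lambda>x. h (pi1 x)) (\<lambda>x. e1 (g x))"
      "agree_on (carr Y) (\<lambda>y. h (pi2 y)) (\<lambda>y. e1 (f (j y)))"
    using UPpb[rule_format, OF conjI[OF ha conjI[OF hc ag]]] by blast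
  have fgj: "\<And>y. y \<in> carr Y \<Longrightarrow> f (j y) = g (j y)"
  proof -
    fix y assume y: "y \<in> carr Y"
    have jy: "j y \<in> carr X" using hom_carr[OF hj y] .
    have "e1 (f (j y)) = h (pi2 y)" using hh(2) y unfolding agree_on_def by simp
    also have "\<dots> = h (pi1 (j y))" using pij[OF y] by simp
    also have "\<dots> = e1 (g (j y))" using hh(1) jy unfolding agree_on_def by simp
    finally show "f (j y) = g (j y)" using inj_onD[OF inje1 _ fZ[OF jy] gZ[OF jy]] by blast
  qed

  define e2 :: "'y \<Rightarrow> ('x \<times> 'y \<times> 'b \<times> 'p) set" where "e2 = (\<lambda>y. {(undefined, y, undefined, undefined)})"
  have inje2: "inj_on e2 (carr Y)" unfolding e2_def by (rule inj_onI) simp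
  define W2 where "W2 = trf Y (carr Y) e2"
  define d2 where "d2 = the_inv_into (carr Y) e2"
  have hd2: "frame_hom W2 Y d2" unfolding W2_def d2_def by (rule trf_hom_out[OF Yf subfr_carr[OF Yf] inje2])
  have he2: "frame_hom Y W2 (\<lambda>y. e2 y)"
    using trf_hom_in[OF Yf subfr_carr[OF Yf] inje2 hom_id[OF Yf]] unfolding W2_def by simp
  have d2e2: "\<And>y. y \<in> carr Y \<Longrightarrow> d2 (e2 y) = y" unfolding d2_def using inje2 by (simp add: the_inv_into_f_f)
  have cW2: "carr W2 = e2 ` carr Y" unfolding W2_def by (rule trf_carr)
  have hh2: "frame_hom W2 X (\<lambda>w. j (d2 w))" by (rule hom_comp[OF hd2 hj])
  have ag2: "agree_on (carr W2) (\<lambda>w. f (j (d2 w))) (\<lambda>w. g (j (d2 w)))"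
    unfolding agree_on_def using fgj hom_carr[OF hd2] by blast
  obtain k where hk: "frame_hom W2 B k" and qk: "agree_on (carr W2) (\<lambda>w. q (k w)) (\<lambda>w. j (d2 w))"
    using UPco[rule_format, OF conjI[OF hh2 ag2]] by blast
  define t where "t = (\<lambda>y. k (e2 y))"
  have ht: "frame_hom Y B t" unfolding t_def by (rule hom_comp[OF he2 hk])
  have qt: "\<And>y. y \<in> carr Y \<Longrightarrow> q (t y) = j y"
    using qk d2e2 cW2 unfolding agree_on_def t_def by simp

  have pt: "\<forall>y\<in>carr Y. p (t y) = y"
  proof
    fix y assume y: "y \<in> carr Y"
    have tyB: "t y \<in> carr B" using hom_carr[OF ht y] .
    have "j (p (t y)) = j y" using jp[OF tyB] qt[OF y] by simp
    then show "p (t y) = y" using jinj[OF hom_carr[OF hp tyB] y] by blast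
  qed

  define e3 :: "'b \<Rightarrow> ('x \<times> 'y \<times> 'b \<times> 'p) set" where "e3 = (\<lambda>b. {(undefined, undefined, b, undefined)})"
  have inje3: "inj_on e3 (carr B)" unfolding e3_def by (rule inj_onI) simp
  define W3 where "W3 = trf B (carr B) e3"
  define d3 where "d3 = the_inv_into (carr B) e3"
  have hd3: "frame_hom W3 B d3" unfolding W3_def d3_def by (rule trf_hom_out[OF Bf subfr_carr[OF Bf] inje3])
  have d3e3: "\<And>b. b \<in> carr B \<Longrightarrow> d3 (e3 b) = b" unfolding d3_def using inje3 by (simp add: the_inv_into_f_f)
  have cW3: "carr W3 = e3 ` carr B" unfolding W3_def by (rule trf_carr)
  have hh3: "frame_hom W3 X (\<lambda>w. q (d3 w))" by (rule hom_comp[OF hd3 hq])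
  have ag3: "agree_on (carr W3) (\<lambda>w. f (q (d3 w))) (\<lambda>w. g (q (d3 w)))"
    unfolding agree_on_def using fgq hom_carr[OF hd3] by blast
  obtain k3 where uniq: "\<forall>k'. frame_hom W3 B k' \<and> agree_on (carr W3) (\<lambda>w. q (k' w)) (\<lambda>w. q (d3 w))
                  \<longrightarrow> agree_on (carr W3) k3 k'"
    using UPco[rule_format, OF conjI[OF hh3 ag3]] by blast
  have u1: "agree_on (carr W3) k3 d3" using uniq hd3 unfolding agree_on_def by blast
  have htp: "frame_hom W3 B (\<lambda>w. t (p (d3 w)))" by (rule hom_comp[OF hd3 hom_comp[OF hp ht]])
  have "agree_on (carr W3) (\<lambda>w. q (t (p (d3 w)))) (\<lambda>w. q (d3 w))"
    unfolding agree_on_def using qt jp hom_carr[OF hd3] hom_carr[OF hp] by simp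
  then have u2: "agree_on (carr W3) k3 (\<lambda>w. t (p (d3 w)))" using uniq htp by blast
  have tp: "\<forall>b\<in>carr B. t (p b) = b"
  proof
    fix b assume b: "b \<in> carr B"
    have w: "e3 b \<in> carr W3" using cW3 b by blast
    have "d3 (e3 b) = t (p (d3 (e3 b)))" using u1 u2 w unfolding agree_on_def by metis
    then show "t (p b) = b" using d3e3[OF b] by simp
  qed
  show ?thesis unfolding loc_iso_def loc_map_def frame_iso_def using hp ht tp pt by blast
qed

end
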